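(* Let $A=H+S\in\mathbb{C}^{n,n}$, where $H=H^*$ is positive semidefinite with $H\neq 0$, and $S=-S^*$ with $S\neq 0$. Then there exist a unitary matrix $U\in\mathbb{C}^{n,n}$, an integer $r\geq 2$, and integers $n_1\geq n_2\geq\cdots\geq n_{r-1}>0$ and $n_r\geq 0$ with $n_1+\cdots+n_r=n$, such that, partitioning conformally with the block sizes $n_1,\dots,n_r$, $$U^*HU=\begin{bmatrix} H_{11} & 0\\ 0 & 0\end{bmatrix},\qquad U^*SU=\begin{bmatrix} S_{11} & S_{12} & & & 0\\ S_{21} & S_{22} & \ddots & & 0\\ & \ddots & \ddots & S_{r-2,r-1} & \vdots\\ & & S_{r-1,r-2} & S_{r-1,r-1} & 0\\ 0 & \cdots & \cdots & 0 & S_{r,r}\end{bmatrix},$$ that is, $U^*SU=[S_{ij}]_{i,j=1}^r$ with $S_{ij}\in\mathbb{C}^{n_i,n_j}$, $S_{ij}=0$ whenever $|i-j|>1$, and $S_{i,r}=0$, $S_{r,i}=0$ for all $i<r$; where $H_{11}=H_{11}^*\in\mathbb{C}^{n_1,n_1}$ is positive definite, $S_{ii}=-S_{ii}^*\in\mathbb{C}^{n_i,n_i}$ for $i=1,\dots,r$, and $S_{i,i-1}=-S_{i-1,i}^*=[\Sigma_{i,i-1}\;\,0]\in\mathbb{C}^{n_i,n_{i-1}}$ with $\Sigma_{i,i-1}\in\mathbb{C}^{n_i,n_i}$ nonsingular for $i=2,\dots,r-1$.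
   Context: $M^*$ denotes the conjugate transpose of $M$. A block of size $0$ is understood to be absent. *)

theory Defs
  imports "Jordan_Normal_Form.Schur_Decomposition" "Jordan_Normal_Form.Determinant"
begin

(* M^* is mat_adjoint M (conjugate transpose, from Jordan_Normal_Form). *)

definition hermitian_mat :: "complex mat \<Rightarrow> bool" where
  "hermitian_mat M \<longleftrightarrow> square_mat M \<and> mat_adjoint M = M"

definition skew_hermitian_mat :: "complex mat \<Rightarrow> bool" where
  "skew_hermitian_mat M \<longleftrightarrow> square_mat M \<and> mat_adjoint M = - M"

definition unitary_mat :: "complex mat \<Rightarrow> bool" where
  "unitary_mat U \<longleftrightarrow> square_mat U \<and> mat_adjoint U * U = 1\<^sub>m (dim_row U)"

definition psd_mat :: "complex mat \<Rightarrow> bool" where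
  "psd_mat M \<longleftrightarrow> hermitian_mat M \<and>
     (\<forall>v \<in> carrier_vec (dim_row M). Re (conjugate v \<bullet> (M *\<^sub>v v)) \<ge> 0)"

definition pd_mat :: "complex mat \<Rightarrow> bool" where
  "pd_mat M \<longleftrightarrow> hermitian_mat M \<and>
     (\<forall>v \<in> carrier_vec (dim_row M). v \<noteq> 0\<^sub>v (dim_row M) \<longrightarrow>
        Re (conjugate v \<bullet> (M *\<^sub>v v)) > 0)"

(* block partitioning with block sizes ns (0-based block indices) *)
definition blk_off :: "nat list \<Rightarrow> nat \<Rightarrow> nat" where
  "blk_off ns i = sum_list (take i ns)"

definition blk :: "'a mat \<Rightarrow> nat list \<Rightarrow> nat \<Rightarrow> nat \<Rightarrow> 'a mat" where
  "blk M ns i j = mat (ns ! i) (ns ! j) (\<lambda>(a, b). M $$ (blk_off ns i + a, blk_off ns j + b))"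

(* horizontal concatenation [A B] of matrices with the same number of rows *)
definition append_cols :: "'a::zero mat \<Rightarrow> 'a mat \<Rightarrow> 'a mat" where
  "append_cols A B = four_block_mat A B (0\<^sub>m 0 (dim_col A)) (0\<^sub>m 0 (dim_col B))"

end

theory Submission
  imports Defs
begin

lemma adj_carrier[simp]: "dim_row (mat_adjoint A) = dim_col A" "dim_col (mat_adjoint A) = dim_row A"
  unfolding mat_adjoint_def by auto

lemma adj_carrier_mat[simp,intro]: "A \<in> carrier_mat n m \<Longrightarrow> mat_adjoint A \<in> carrier_mat m n"
  unfolding carrier_mat_def by simp

lemma adj_index[simp]: "i < dim_col A \<Longrightarrow> j < dim_row A \<Longrightarrow> mat_adjoint A $$ (i,j) = conjugate (A $$ (j,i))"
  unfolding mat_adjoint_def by (simp add: mat_of_rows_index)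
lemma adj_adj[simp]: "mat_adjoint (mat_adjoint (A :: complex mat)) = A"
  by (rule eq_matI, auto)

lemma adj_mult: assumes "A \<in> carrier_mat n k" "B \<in> carrier_mat k m"
  shows "mat_adjoint (A * (B :: complex mat)) = mat_adjoint B * mat_adjoint A"
proof (rule eq_matI)
  fix i j assume ij: "i < dim_row (mat_adjoint B * mat_adjoint A)" "j < dim_col (mat_adjoint B * mat_adjoint A)"
  hence i: "i < m" and j: "j < n" using assms by auto
  have "mat_adjoint (A * B) $$ (i,j) = cnj (\<Sum>l = 0..<k. A $$ (j,l) * B $$ (l,i))"
    using assms i j by (simp add: scalar_prod_def)
  also have "\<dots> = (\<Sum>l = 0..<k. cnj (B $$ (l,i)) * cnj (A $$ (j,l)))"
    by (simp add: mult.commute)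
  also have "\<dots> = (mat_adjoint B * mat_adjoint A) $$ (i,j)"
    using assms i j by (simp add: scalar_prod_def)
  finally show "mat_adjoint (A * B) $$ (i,j) = (mat_adjoint B * mat_adjoint A) $$ (i,j)" .
qed (insert assms, auto)

lemma adj_add: assumes "A \<in> carrier_mat n m" "B \<in> carrier_mat n m"
  shows "mat_adjoint (A + (B :: complex mat)) = mat_adjoint A + mat_adjoint B"
  by (rule eq_matI, insert assms, auto)

lemma adj_uminus: "mat_adjoint (- (A :: complex mat)) = - mat_adjoint A"
  by (rule eq_matI, auto)

lemma adj_zero[simp]: "mat_adjoint (0\<^sub>m n m :: complex mat) = 0\<^sub>m m n"
  by (rule eq_matI, auto)

lemma adj_one[simp]: "mat_adjoint (1\<^sub>m n :: complex mat) = 1\<^sub>m n"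
  by (rule eq_matI, auto)

lemma adj_four_block: assumes "A \<in> carrier_mat n1 m1" "B \<in> carrier_mat n1 m2"
  "C \<in> carrier_mat n2 m1" "D \<in> carrier_mat n2 m2"
  shows "mat_adjoint (four_block_mat A B C (D :: complex mat)) =
    four_block_mat (mat_adjoint A) (mat_adjoint C) (mat_adjoint B) (mat_adjoint D)"
  by (rule eq_matI, insert assms, auto simp: four_block_mat_def)

lemma unitary_carrier: "unitary_mat U \<Longrightarrow> U \<in> carrier_mat (dim_row U) (dim_row U)"
  unfolding unitary_mat_def square_mat.simps by (intro carrier_matI, auto)

lemma unitaryD: assumes "unitary_mat U" "U \<in> carrier_mat n n"
  shows "mat_adjoint U * U = 1\<^sub>m n" "U * mat_adjoint U = 1\<^sub>m n"
proof -
  show 1: "mat_adjoint U * U = 1\<^sub>m n" using assms unfolding unitary_mat_def by auto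
  show "U * mat_adjoint U = 1\<^sub>m n"
    by (rule mat_mult_left_right_inverse[OF _ _ 1], insert assms, auto)
qed

lemma unitaryI: assumes "U \<in> carrier_mat n n" "mat_adjoint U * U = 1\<^sub>m n"
  shows "unitary_mat U"
  using assms unfolding unitary_mat_def by auto

lemma unitaryI2: assumes "U \<in> carrier_mat n n" "U * mat_adjoint U = 1\<^sub>m n"
  shows "unitary_mat U"
proof -
  have "mat_adjoint U * U = 1\<^sub>m n"
    by (rule mat_mult_left_right_inverse[OF _ _ assms(2)], insert assms, auto)
  thus ?thesis using assms unitaryI by auto
qed

lemma unitary_one: "unitary_mat (1\<^sub>m n)"
  by (rule unitaryI[of _ n], auto)

lemma unitary_mult: assumes "unitary_mat U" "U \<in> carrier_mat n n" "unitary_mat V" "V \<in> carrier_mat n n"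
  shows "unitary_mat (U * V)"
proof (rule unitaryI[of _ n])
  show "U * V \<in> carrier_mat n n" using assms by auto
  have "mat_adjoint (U * V) * (U * V) = mat_adjoint V * (mat_adjoint U * (U * V))"
    using assms by (simp add: adj_mult[of _ n n _ n] assoc_mult_mat[of _ n n _ n _ n])
  also have "mat_adjoint U * (U * V) = (mat_adjoint U * U) * V"
    using assms by (simp add: assoc_mult_mat[of _ n n _ n _ n])
  also have "\<dots> = V" using assms unitaryD[of U n] by simp
  also have "mat_adjoint V * V = 1\<^sub>m n" using assms unitaryD[of V n] by simp
  finally show "mat_adjoint (U * V) * (U * V) = 1\<^sub>m n" .
qed

lemma unitary_adj: assumes "unitary_mat U" "U \<in> carrier_mat n n"
  shows "unitary_mat (mat_adjoint U)"
  by (rule unitaryI[of _ n], insert unitaryD[OF assms] assms, auto)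

lemma unitary_diag: assumes "unitary_mat U" "U \<in> carrier_mat n n" "unitary_mat V" "V \<in> carrier_mat m m"
  shows "unitary_mat (four_block_mat U (0\<^sub>m n m) (0\<^sub>m m n) V)"
proof (rule unitaryI[of _ "n+m"])
  show "four_block_mat U (0\<^sub>m n m) (0\<^sub>m m n) V \<in> carrier_mat (n+m) (n+m)" using assms by auto
  have "mat_adjoint (four_block_mat U (0\<^sub>m n m) (0\<^sub>m m n) V) = four_block_mat (mat_adjoint U) (0\<^sub>m n m) (0\<^sub>m m n) (mat_adjoint V)"
    using assms by (simp add: adj_four_block[OF assms(2) zero_carrier_mat zero_carrier_mat assms(4)])
  also have "\<dots> * four_block_mat U (0\<^sub>m n m) (0\<^sub>m m n) V = four_block_mat (1\<^sub>m n) (0\<^sub>m n m) (0\<^sub>m m n) (1\<^sub>m m)"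
    using assms unitaryD[of U n] unitaryD[of V m]
    by (subst mult_four_block_mat[OF adj_carrier_mat[OF assms(2)] zero_carrier_mat zero_carrier_mat adj_carrier_mat[OF assms(4)] assms(2) zero_carrier_mat zero_carrier_mat assms(4)], auto)
  finally show "mat_adjoint (four_block_mat U (0\<^sub>m n m) (0\<^sub>m m n) V) * four_block_mat U (0\<^sub>m n m) (0\<^sub>m m n) V = 1\<^sub>m (n+m)"
    by simp
qed



lemma unitary_completion:
  fixes v :: "complex vec"
  assumes v: "v \<in> carrier_vec m" and v0: "v \<noteq> 0\<^sub>v m"
  shows "\<exists>Q c. Q \<in> carrier_mat m m \<and> unitary_mat Q \<and> 0 < m \<and> col Q (m - 1) = c \<cdot>\<^sub>v v"
proof -
  interpret cof_vec_space m "TYPE(complex)" .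
  define bs where "bs = basis_completion v"
  note bc = basis_completion[OF v v0, folded bs_def]
  define ws where "ws = gram_schmidt m bs"
  note gs = gram_schmidt_result[OF bc(2) bc(4) bc(5) ws_def]
  have len: "length ws = m" using gs bc by simp
  have m0: "0 < m" using v0 v by (cases m, auto)
  have hdws: "hd ws = v" unfolding ws_def using bc(7) bc(6) m0 v
    by (cases bs, auto)
  have wsc: "\<And>i. i < m \<Longrightarrow> ws ! i \<in> carrier_vec m" using gs(3) len by auto
  have orth: "\<And>i j. i < m \<Longrightarrow> j < m \<Longrightarrow> (ws ! i \<bullet>c ws ! j = 0) = (i \<noteq> j)"
    using gs(2) len unfolding corthogonal_def by auto
  define nr where "nr = (\<lambda>w :: complex vec. complex_of_real (sqrt (Re (w \<bullet>c w))))"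
  define us where "us = map (\<lambda>w. (1 / nr w) \<cdot>\<^sub>v w) (rev ws)"
  have lenu: "length us = m" unfolding us_def using len by simp
  have usi: "\<And>i. i < m \<Longrightarrow> us ! i = (1 / nr (ws ! (m - 1 - i))) \<cdot>\<^sub>v ws ! (m - 1 - i)"
    unfolding us_def using len by (simp add: rev_nth)
  have real: "\<And>w :: complex vec. w \<bullet>c w = complex_of_real (Re (w \<bullet>c w))"
  proof -
    fix w :: "complex vec"
    have "Im (w \<bullet>c w) = 0"
      by (simp add: scalar_prod_def Im_sum)
    thus "w \<bullet>c w = complex_of_real (Re (w \<bullet>c w))" by (simp add: complex_eq_iff)
  qed
  have pos: "\<And>i. i < m \<Longrightarrow> Re (ws ! i \<bullet>c ws ! i) > 0"
  proof -
    fix i assume i: "i < m"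
    have "ws ! i \<bullet>c ws ! i \<noteq> 0" using orth[OF i i] by simp
    moreover have "Re (ws ! i \<bullet>c ws ! i) \<ge> 0"
      using conjugate_square_ge_0_vec[of "ws ! i"] by (simp add: less_eq_complex_def)
    ultimately show "Re (ws ! i \<bullet>c ws ! i) > 0" using real[of "ws ! i"]
      by (metis le_less of_real_0)
  qed
  define Q where "Q = mat_of_cols m us"
  have Q: "Q \<in> carrier_mat m m" unfolding Q_def using lenu by auto
  have colQ: "\<And>i. i < m \<Longrightarrow> col Q i = us ! i"
    unfolding Q_def using lenu usi wsc by (subst col_mat_of_cols, auto)
  have "mat_adjoint Q * Q = 1\<^sub>m m"
  proof (rule eq_matI)
    fix i j assume "i < dim_row (1\<^sub>m m)" "j < dim_col (1\<^sub>m m)"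
    hence i: "i < m" and j: "j < m" by auto
    have "(mat_adjoint Q * Q) $$ (i, j) = conjugate (col Q i) \<bullet> col Q j"
      using Q i j by (simp add: mat_adjoint_def)
    also have "\<dots> = col Q j \<bullet>c col Q i"
      using Q i j by (simp add: comm_scalar_prod[of _ m])
    also have "\<dots> = us ! j \<bullet>c us ! i" using colQ i j by simp
    also have "\<dots> = (1 / nr (ws ! (m - 1 - j))) * conjugate (1 / nr (ws ! (m - 1 - i))) * (ws ! (m - 1 - j) \<bullet>c ws ! (m - 1 - i))"
      unfolding usi[OF i] usi[OF j] using wsc i j
      by (simp add: conjugate_smult_vec scalar_prod_smult_distrib[of _ m] smult_scalar_prod_distrib[of _ m])
    also have "\<dots> = 1\<^sub>m m $$ (i, j)"
    proof (cases "i = j")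
      case True
      define w where "w = ws ! (m - 1 - i)"
      have p: "Re (w \<bullet>c w) > 0" unfolding w_def using pos i by simp
      define r where "r = Re (w \<bullet>c w)"
      have wr: "w \<bullet>c w = complex_of_real r" unfolding r_def by (rule real)
      have r: "r > 0" using p unfolding r_def .
      have "(1 / nr w) * conjugate (1 / nr w) * (w \<bullet>c w) = complex_of_real ((1 / sqrt r) * (1 / sqrt r) * r)"
        unfolding nr_def r_def[symmetric] wr using r by (simp flip: of_real_mult)
      also have "(1 / sqrt r) * (1 / sqrt r) * r = 1" using r
        by (simp add: field_simps)
      finally have "(1 / nr w) * conjugate (1 / nr w) * (w \<bullet>c w) = 1" by simp
      thus ?thesis using True i unfolding w_def by simp
    next
      case False
      hence "ws ! (m - 1 - j) \<bullet>c ws ! (m - 1 - i) = 0" using orth i j by simp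
      thus ?thesis using False i j by simp
    qed
    finally show "(mat_adjoint Q * Q) $$ (i, j) = 1\<^sub>m m $$ (i, j)" .
  qed (insert Q, auto)
  hence U: "unitary_mat Q" using Q unitaryI by auto
  have "col Q (m - 1) = (1 / nr (ws ! 0)) \<cdot>\<^sub>v v"
    proof -
    have "ws \<noteq> []" using len m0 by auto
    hence "ws ! 0 = v" using hdws by (simp add: hd_conv_nth)
    thus ?thesis using colQ[of "m - 1"] usi[of "m - 1"] m0 by simp
  qed
  thus ?thesis using Q U m0 by blast
qed



definition inj_mat :: "complex mat \<Rightarrow> bool" where
  "inj_mat X \<longleftrightarrow> (\<forall>v \<in> carrier_vec (dim_col X). X *\<^sub>v v = 0\<^sub>v (dim_row X) \<longrightarrow> v = 0\<^sub>v (dim_col X))"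

lemma append_cols_dims[simp]: "dim_row (append_cols A B) = dim_row A" "dim_col (append_cols A B) = dim_col A + dim_col B"
  unfolding append_cols_def by auto

lemma append_cols_carrier[simp, intro]: "A \<in> carrier_mat n m1 \<Longrightarrow> B \<in> carrier_mat n m2 \<Longrightarrow> append_cols A B \<in> carrier_mat n (m1 + m2)"
  unfolding carrier_mat_def by auto

lemma append_cols_index: "i < dim_row A \<Longrightarrow> j < dim_col A + dim_col B \<Longrightarrow>
  append_cols A B $$ (i,j) = (if j < dim_col A then A $$ (i,j) else B $$ (i, j - dim_col A))"
  unfolding append_cols_def four_block_mat_def Let_def by auto

lemma append_cols_zero0: "A \<in> carrier_mat k p \<Longrightarrow> append_cols A (0\<^sub>m k 0) = A"
  by (rule eq_matI, auto simp: append_cols_index)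

lemma append_cols_zero_zero: "A \<in> carrier_mat k p \<Longrightarrow>
  append_cols (append_cols A (0\<^sub>m k a)) (0\<^sub>m k b) = append_cols A (0\<^sub>m k (a + b))"
  by (rule eq_matI, auto simp: append_cols_index)

lemma inj_mat_le: assumes X: "X \<in> carrier_mat a b" and inj: "inj_mat X" shows "b \<le> a"
proof (rule ccontr)
  assume "\<not> b \<le> a"
  hence ab: "a < b" by simp
  define c where "c = (\<lambda>i. if i < a then row X i else 0\<^sub>v b)"
  define M where "M = mat\<^sub>r b b (\<lambda>i. if i = b - 1 then 0\<^sub>v b else c i)"
  have "det M = 0" unfolding M_def by (rule det_row_0, insert ab X, auto simp: c_def)
  moreover have Mc: "M \<in> carrier_mat b b" unfolding M_def by simp
  ultimately obtain v where v: "v \<in> carrier_vec b" "v \<noteq> 0\<^sub>v b" "M *\<^sub>v v = 0\<^sub>v b"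
    using det_0_iff_vec_prod_zero[OF Mc] by auto
  have "X *\<^sub>v v = 0\<^sub>v a"
  proof (rule eq_vecI)
    fix i assume "i < dim_vec (0\<^sub>v a :: complex vec)"
    hence i: "i < a" by simp
    have "(M *\<^sub>v v) $ i = 0" using v i ab by simp
    moreover have "(M *\<^sub>v v) $ i = row X i \<bullet> v" using i ab X unfolding M_def c_def by auto
    ultimately show "(X *\<^sub>v v) $ i = 0\<^sub>v a $ i" using i X by simp
  qed (insert X, auto)
  with inj X v show False unfolding inj_mat_def by auto
qed

lemma inj_mat_det: assumes X: "X \<in> carrier_mat a a" and inj: "inj_mat X" shows "det X \<noteq> 0"
  using det_0_iff_vec_prod_zero[OF X] inj X unfolding inj_mat_def by auto

lemma col_compress: assumes "B \<in> carrier_mat k m"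
  shows "\<exists>W p X. W \<in> carrier_mat m m \<and> unitary_mat W \<and> p \<le> m \<and> X \<in> carrier_mat k p \<and> inj_mat X \<and>
     B * W = append_cols X (0\<^sub>m k (m - p))"
  using assms
proof (induction m arbitrary: B)
  case (0 B)
  show ?case
    by (rule exI[of _ "1\<^sub>m 0"], rule exI[of _ 0], rule exI[of _ B], insert 0,
        auto simp: unitary_one append_cols_zero0 inj_mat_def)
next
  case (Suc m' B)
  let ?m = "Suc m'"
  show ?case
  proof (cases "inj_mat B")
    case True
    show ?thesis
      by (rule exI[of _ "1\<^sub>m ?m"], rule exI[of _ ?m], rule exI[of _ B], insert Suc True,
        auto simp: unitary_one append_cols_zero0)
  next
    case False
    then obtain v where v: "v \<in> carrier_vec ?m" "v \<noteq> 0\<^sub>v ?m" "B *\<^sub>v v = 0\<^sub>v k"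
      using Suc.prems unfolding inj_mat_def by auto
    from unitary_completion[OF v(1,2)] obtain Q c where
      Q: "Q \<in> carrier_mat ?m ?m" "unitary_mat Q" "col Q m' = c \<cdot>\<^sub>v v" by auto
    have B: "B \<in> carrier_mat k ?m" by fact
    have "col (B * Q) m' = B *\<^sub>v col Q m'" by (rule col_mult2[OF B Q(1)], simp)
    also have "\<dots> = c \<cdot>\<^sub>v (B *\<^sub>v v)" unfolding Q(3) using B v by (simp add: mult_mat_vec[of _ k ?m])
    also have "\<dots> = 0\<^sub>v k" unfolding v(3) by (intro eq_vecI, auto)
    finally have lastcol: "col (B * Q) m' = 0\<^sub>v k" .
    define B1 where "B1 = mat k m' (\<lambda>(i,j). (B * Q) $$ (i,j))"
    have B1: "B1 \<in> carrier_mat k m'" unfolding B1_def by auto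
    have BQ: "B * Q = append_cols B1 (0\<^sub>m k 1)"
    proof (rule eq_matI)
      fix i j assume ij: "i < dim_row (append_cols B1 (0\<^sub>m k 1))" "j < dim_col (append_cols B1 (0\<^sub>m k 1))"
      hence i: "i < k" and j: "j < ?m" using B1 by auto
      show "(B * Q) $$ (i, j) = append_cols B1 (0\<^sub>m k 1) $$ (i, j)"
      proof (cases "j < m'")
        case True thus ?thesis using i j B1 by (simp add: append_cols_index B1_def)
      next
        case False
        hence jm: "j = m'" using j by simp
        have "(B * Q) $$ (i, j) = col (B * Q) m' $ i" using i jm B Q by simp
        thus ?thesis using lastcol i jm B1 by (simp add: append_cols_index)
      qed
    qed (insert B Q B1, auto)
    from Suc.IH[OF B1] obtain W1 p X where IH: "W1 \<in> carrier_mat m' m'" "unitary_mat W1" "p \<le> m'"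
      "X \<in> carrier_mat k p" "inj_mat X" "B1 * W1 = append_cols X (0\<^sub>m k (m' - p))" by blast
    define D where "D = four_block_mat W1 (0\<^sub>m m' 1) (0\<^sub>m 1 m') (1\<^sub>m 1)"
    have D: "D \<in> carrier_mat ?m ?m" "unitary_mat D" unfolding D_def using IH
      using unitary_diag[OF IH(2,1) unitary_one[of 1]] by auto
    define W where "W = Q * D"
    have W: "W \<in> carrier_mat ?m ?m" "unitary_mat W" unfolding W_def using Q D unitary_mult[of Q ?m D] by auto
    have "B * W = (B * Q) * D" unfolding W_def using B Q D by (simp add: assoc_mult_mat[of _ k ?m _ ?m _ ?m])
    also have "\<dots> = four_block_mat B1 (0\<^sub>m k 1) (0\<^sub>m 0 m') (0\<^sub>m 0 1) * D"
      unfolding BQ append_cols_def using B1 by simp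
    also have "\<dots> = four_block_mat (B1 * W1) (0\<^sub>m k 1) (0\<^sub>m 0 m') (0\<^sub>m 0 1)"
      unfolding D_def using B1 IH
      by (subst mult_four_block_mat[OF B1 zero_carrier_mat zero_carrier_mat zero_carrier_mat IH(1) zero_carrier_mat zero_carrier_mat one_carrier_mat], auto)
    also have "\<dots> = append_cols (B1 * W1) (0\<^sub>m k 1)" unfolding append_cols_def using B1 IH by simp
    also have "\<dots> = append_cols X (0\<^sub>m k (?m - p))" unfolding IH(6)
      using append_cols_zero_zero[OF IH(4), of "m' - p" 1] IH(3) by (simp add: Suc_diff_le)
    finally show ?thesis using W IH by (intro exI[of _ W] exI[of _ p] exI[of _ X], auto)
  qed
qed



lemma four_block_index: "four_block_mat A B C D $$ (i,j) = 
  (if i < dim_row A then if j < dim_col A then A $$ (i, j) else B $$ (i, j - dim_col A)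
   else if j < dim_col A then C $$ (i - dim_row A, j) else D $$ (i - dim_row A, j - dim_col A))"
  if "i < dim_row A + dim_row D" "j < dim_col A + dim_col D"
  using that unfolding four_block_mat_def Let_def by auto

lemma mult_append_cols: assumes A: "A \<in> carrier_mat n r" and X: "X \<in> carrier_mat r p" and Z: "Z \<in> carrier_mat r q"
  shows "A * append_cols X Z = append_cols (A * X) (A * Z)"
proof (rule eq_matI)
  fix i j assume ij: "i < dim_row (append_cols (A * X) (A * Z))" "j < dim_col (append_cols (A * X) (A * Z))"
  hence i: "i < n" and j: "j < p + q" using A X Z by auto
  have c: "col (append_cols X Z) j = (if j < p then col X j else col Z (j - p))"
    by (rule eq_vecI, insert X Z j, auto simp: append_cols_index)
  show "(A * append_cols X Z) $$ (i, j) = append_cols (A * X) (A * Z) $$ (i, j)"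
    using i j A X Z c by (simp add: append_cols_index)
qed (insert A X Z, auto)

lemma two_sided: assumes C: "C \<in> carrier_mat m k"
  shows "\<exists>W Q p \<Sigma>. W \<in> carrier_mat m m \<and> unitary_mat W \<and> Q \<in> carrier_mat k k \<and> unitary_mat Q \<and>
    p \<le> m \<and> p \<le> k \<and> \<Sigma> \<in> carrier_mat p p \<and> det \<Sigma> \<noteq> 0 \<and>
    mat_adjoint W * C * Q = four_block_mat \<Sigma> (0\<^sub>m p (k - p)) (0\<^sub>m (m - p) p) (0\<^sub>m (m - p) (k - p))"
proof -
  from col_compress[OF C] obtain Q p X where Q: "Q \<in> carrier_mat k k" "unitary_mat Q" "p \<le> k"
    and X: "X \<in> carrier_mat m p" "inj_mat X" and CQ: "C * Q = append_cols X (0\<^sub>m m (k - p))" by blast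
  have Xa: "mat_adjoint X \<in> carrier_mat p m" using X by auto
  from col_compress[OF Xa] obtain W q Y where W: "W \<in> carrier_mat m m" "unitary_mat W" "q \<le> m"
    and Y: "Y \<in> carrier_mat p q" "inj_mat Y" and XW: "mat_adjoint X * W = append_cols Y (0\<^sub>m p (m - q))" by blast
  define \<Sigma> where "\<Sigma> = mat_adjoint Y"
  have Sig: "\<Sigma> \<in> carrier_mat q p" unfolding \<Sigma>_def using Y by auto
  have WX: "mat_adjoint W * X = four_block_mat \<Sigma> (0\<^sub>m q 0) (0\<^sub>m (m - q) p) (0\<^sub>m (m - q) 0)"
  proof -
    have "mat_adjoint W * X = mat_adjoint (mat_adjoint X * W)"
      using X W by (simp add: adj_mult[of _ p m _ m])
    also have "\<dots> = four_block_mat \<Sigma> (0\<^sub>m q 0) (0\<^sub>m (m - q) p) (0\<^sub>m (m - q) 0)"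
      unfolding XW append_cols_def \<Sigma>_def using Y
      by (subst adj_four_block[of _ p q _ "m - q" _ 0], auto)
    finally show ?thesis .
  qed
  have "mat_adjoint W * C * Q = mat_adjoint W * (C * Q)"
    using W C Q by (simp add: assoc_mult_mat[of _ m m _ k _ k])
  also have "\<dots> = append_cols (mat_adjoint W * X) (mat_adjoint W * 0\<^sub>m m (k - p))"
    unfolding CQ using W X by (subst mult_append_cols[of _ m m _ p _ "k - p"], auto)
  also have "\<dots> = four_block_mat \<Sigma> (0\<^sub>m q (k - p)) (0\<^sub>m (m - q) p) (0\<^sub>m (m - q) (k - p))"
    unfolding WX using W Sig by (intro eq_matI, auto simp: append_cols_index four_block_index)
  finally have eq: "mat_adjoint W * C * Q = four_block_mat \<Sigma> (0\<^sub>m q (k - p)) (0\<^sub>m (m - q) p) (0\<^sub>m (m - q) (k - p))" .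
  have "inj_mat \<Sigma>" unfolding inj_mat_def
  proof (intro ballI impI)
    fix v assume v: "v \<in> carrier_vec (dim_col \<Sigma>)" and Sv: "\<Sigma> *\<^sub>v v = 0\<^sub>v (dim_row \<Sigma>)"
    have v': "v \<in> carrier_vec p" using v Sig by auto
    have "(mat_adjoint W * X) *\<^sub>v v = 0\<^sub>v m"
    proof (rule eq_vecI)
      fix i assume "i < dim_vec (0\<^sub>v m :: complex vec)"
      hence i: "i < m" by simp
      show "((mat_adjoint W * X) *\<^sub>v v) $ i = 0\<^sub>v m $ i"
      proof (cases "i < q")
        case True
        have r: "row (four_block_mat \<Sigma> (0\<^sub>m q 0) (0\<^sub>m (m - q) p) (0\<^sub>m (m - q) 0)) i = row \<Sigma> i"
          using True i Sig W by (intro eq_vecI, auto simp: four_block_index)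
        have "((mat_adjoint W * X) *\<^sub>v v) $ i = row \<Sigma> i \<bullet> v"
          unfolding WX using i True Sig v' W r by simp
        also have "\<dots> = (\<Sigma> *\<^sub>v v) $ i" using True Sig by simp
        finally show ?thesis using Sv i True Sig by simp
      next
        case False
        have "row (four_block_mat \<Sigma> (0\<^sub>m q 0) (0\<^sub>m (m - q) p) (0\<^sub>m (m - q) 0)) i = 0\<^sub>v p"
          using False i Sig W by (intro eq_vecI, auto simp: four_block_index)
        thus ?thesis unfolding WX using i v' False Sig W by simp
      qed
    qed (insert W X, auto)
    hence h: "(mat_adjoint W * X) *\<^sub>v v = 0\<^sub>v m" .
    have "W * (mat_adjoint W * X) = X"
      using W X unitaryD[of W m] by (simp add: assoc_mult_mat[symmetric, of _ m m _ m _ p])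
    hence "X *\<^sub>v v = (W * (mat_adjoint W * X)) *\<^sub>v v" by simp
    also have "\<dots> = W *\<^sub>v ((mat_adjoint W * X) *\<^sub>v v)"
      using W X v' by (subst assoc_mult_mat_vec[of _ m m _ p], auto)
    also have "\<dots> = 0\<^sub>v m" unfolding h using W by (intro eq_vecI, auto)
    finally have "X *\<^sub>v v = 0\<^sub>v m" .
    with X v' show "v = 0\<^sub>v (dim_col \<Sigma>)" using Sig unfolding inj_mat_def by auto
  qed
  from inj_mat_le[OF Sig this] inj_mat_le[OF Y] have pq: "p = q" by simp
  have "det \<Sigma> \<noteq> 0" using inj_mat_det[of \<Sigma> p] Sig pq \<open>inj_mat \<Sigma>\<close> by simp
  show ?thesis using eq Sig pq W Q \<open>det \<Sigma> \<noteq> 0\<close>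
    by (intro exI[of _ W] exI[of _ Q] exI[of _ p] exI[of _ \<Sigma>], auto)
qed



lemma blk_off_0[simp]: "blk_off ns 0 = 0" unfolding blk_off_def by simp
lemma blk_off_Cons_Suc[simp]: "blk_off (k # ns) (Suc i) = k + blk_off ns i" unfolding blk_off_def by simp

lemma blk_off_bound: "i < length ns \<Longrightarrow> blk_off ns i + ns ! i \<le> sum_list ns"
proof (induction ns arbitrary: i)
  case (Cons a ns i) thus ?case by (cases i, auto)
qed simp

lemma blk_off_mono: "i < j \<Longrightarrow> j < length ns \<Longrightarrow> blk_off ns i + ns ! i \<le> blk_off ns j"
proof (induction ns arbitrary: i j)
  case (Cons a ns i j)
  then obtain j' where j: "j = Suc j'" by (cases j, auto)
  show ?case
  proof (cases i)
    case 0 thus ?thesis using j by simp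
  next
    case (Suc i') thus ?thesis using Cons j by auto
  qed
qed simp

lemma blk_dims[simp]: "dim_row (blk M ns i j) = ns ! i" "dim_col (blk M ns i j) = ns ! j"
  unfolding blk_def by auto

lemma blk_carrier[simp,intro]: "blk M ns i j \<in> carrier_mat (ns ! i) (ns ! j)"
  unfolding blk_def by auto

lemma blk_index[simp]: "a < ns ! i \<Longrightarrow> b < ns ! j \<Longrightarrow> blk M ns i j $$ (a,b) = M $$ (blk_off ns i + a, blk_off ns j + b)"
  unfolding blk_def by auto

context
  fixes A B C D :: "complex mat" and k m :: nat and ns' :: "nat list"
  assumes A: "A \<in> carrier_mat k k" and B: "B \<in> carrier_mat k m" and C: "C \<in> carrier_mat m k"
    and D: "D \<in> carrier_mat m m" and sns: "sum_list ns' = m"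
begin

lemma blk_fb_00: "blk (four_block_mat A B C D) (k # ns') 0 0 = A"
  by (rule eq_matI, insert A B C D, auto simp: four_block_index)

lemma blk_fb_SS: assumes "i < length ns'" "j < length ns'"
  shows "blk (four_block_mat A B C D) (k # ns') (Suc i) (Suc j) = blk D ns' i j"
proof (rule eq_matI)
  fix a b assume ab: "a < dim_row (blk D ns' i j)" "b < dim_col (blk D ns' i j)"
  have "blk_off ns' i + a < m" "blk_off ns' j + b < m" using blk_off_bound[of i ns'] blk_off_bound[of j ns'] assms ab sns by auto
  thus "blk (four_block_mat A B C D) (k # ns') (Suc i) (Suc j) $$ (a, b) = blk D ns' i j $$ (a, b)"
    using ab A B C D by (auto simp: four_block_index)
qed auto

lemma blk_fb_S0: assumes "i < length ns'"
  shows "blk (four_block_mat A B C D) (k # ns') (Suc i) 0 = mat (ns' ! i) k (\<lambda>(a,b). C $$ (blk_off ns' i + a, b))"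
proof (rule eq_matI)
  fix a b assume ab: "a < dim_row (mat (ns' ! i) k (\<lambda>(a,b). C $$ (blk_off ns' i + a, b)))"
     "b < dim_col (mat (ns' ! i) k (\<lambda>(a,b). C $$ (blk_off ns' i + a, b)))"
  have "blk_off ns' i + a < m" using blk_off_bound[of i ns'] assms ab sns by auto
  thus "blk (four_block_mat A B C D) (k # ns') (Suc i) 0 $$ (a, b) = mat (ns' ! i) k (\<lambda>(a,b). C $$ (blk_off ns' i + a, b)) $$ (a, b)"
    using ab A B C D by (auto simp: four_block_index)
qed auto

end

lemma blk_skew: assumes S: "S \<in> carrier_mat N N" and sk: "skew_hermitian_mat S" and sns: "sum_list ns = N"
  and i: "i < length ns" and j: "j < length ns"
  shows "blk S ns i j = - mat_adjoint (blk S ns j i)"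
proof (rule eq_matI)
  fix a b assume ab: "a < dim_row (- mat_adjoint (blk S ns j i))" "b < dim_col (- mat_adjoint (blk S ns j i))"
  hence a: "a < ns ! i" and b: "b < ns ! j" by auto
  have x: "blk_off ns i + a < N" "blk_off ns j + b < N" using blk_off_bound[OF i] blk_off_bound[OF j] a b sns by auto
  have "mat_adjoint S = - S" using sk unfolding skew_hermitian_mat_def by auto
  hence "mat_adjoint S $$ (blk_off ns i + a, blk_off ns j + b) = (- S) $$ (blk_off ns i + a, blk_off ns j + b)" by simp
  hence "S $$ (blk_off ns i + a, blk_off ns j + b) = - conjugate (S $$ (blk_off ns j + b, blk_off ns i + a))"
    using x S by auto
  thus "blk S ns i j $$ (a, b) = (- mat_adjoint (blk S ns j i)) $$ (a, b)" using a b by simp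
qed auto

lemma blk_skew_diag: assumes S: "S \<in> carrier_mat N N" and sk: "skew_hermitian_mat S" and sns: "sum_list ns = N"
  and i: "i < length ns"
  shows "skew_hermitian_mat (blk S ns i i)"
proof -
  have "mat_adjoint (blk S ns i i) = mat_adjoint (- mat_adjoint (blk S ns i i))"
    using blk_skew[OF S sk sns i i] by metis
  also have "\<dots> = - blk S ns i i" by (simp add: adj_uminus)
  finally show ?thesis unfolding skew_hermitian_mat_def by simp
qed

lemma skew_congr: assumes S: "S \<in> carrier_mat n n" and sk: "skew_hermitian_mat S" and U: "U \<in> carrier_mat n m"
  shows "skew_hermitian_mat (mat_adjoint U * S * U)"
proof -
  have "mat_adjoint (mat_adjoint U * S * U) = mat_adjoint U * mat_adjoint (mat_adjoint U * S)"
    using S U by (subst adj_mult[of _ m n], auto)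
  also have "mat_adjoint (mat_adjoint U * S) = mat_adjoint S * U"
    using S U by (subst adj_mult[of _ m n], auto)
  also have "mat_adjoint U * (mat_adjoint S * U) = mat_adjoint U * mat_adjoint S * U"
    using S U by (simp add: assoc_mult_mat[of _ m n _ n _ m])
  also have "\<dots> = - (mat_adjoint U * S * U)" using sk S U unfolding skew_hermitian_mat_def
    by auto
  finally show ?thesis unfolding skew_hermitian_mat_def using S U by simp
qed



definition stair :: "complex mat \<Rightarrow> nat list \<Rightarrow> bool" where
"stair S' ns \<longleftrightarrow> (let r = length ns in
   r \<ge> 2 \<and>
   (\<forall>i j. i \<le> j \<and> j < r - 1 \<longrightarrow> ns ! j \<le> ns ! i) \<and>
   (\<forall>i < r - 1. ns ! i > 0) \<and>
   (\<forall>i < r. \<forall>j < r. (i + 1 < j \<or> j + 1 < i) \<longrightarrow> blk S' ns i j = 0\<^sub>m (ns ! i) (ns ! j)) \<and>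
   (\<forall>i < r - 1. blk S' ns i (r - 1) = 0\<^sub>m (ns ! i) (ns ! (r - 1)) \<and>
                blk S' ns (r - 1) i = 0\<^sub>m (ns ! (r - 1)) (ns ! i)) \<and>
   (\<forall>i < r. skew_hermitian_mat (blk S' ns i i)) \<and>
   (\<forall>i. 1 \<le> i \<and> i < r - 1 \<longrightarrow>
       blk S' ns i (i - 1) = - mat_adjoint (blk S' ns (i - 1) i) \<and>
       (\<exists>\<Sigma>. \<Sigma> \<in> carrier_mat (ns ! i) (ns ! i) \<and> det \<Sigma> \<noteq> 0 \<and>
          blk S' ns i (i - 1) = append_cols \<Sigma> (0\<^sub>m (ns ! i) (ns ! (i - 1) - ns ! i)))))"

lemma blk_split: assumes S: "S \<in> carrier_mat (k + m) (k + m)"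
  shows "S = four_block_mat (blk S [k,m] 0 0) (blk S [k,m] 0 1) (blk S [k,m] 1 0) (blk S [k,m] 1 1)"
  by (rule eq_matI, insert S, auto simp: four_block_index blk_off_def)

lemma fb_congr: fixes A B C D Q W :: "complex mat" assumes A: "A \<in> carrier_mat k k" and B: "B \<in> carrier_mat k m" and C: "C \<in> carrier_mat m k"
  and D: "D \<in> carrier_mat m m" and Q: "Q \<in> carrier_mat k k" and W: "W \<in> carrier_mat m m"
  shows "mat_adjoint (four_block_mat Q (0\<^sub>m k m) (0\<^sub>m m k) W) * four_block_mat A B C D * four_block_mat Q (0\<^sub>m k m) (0\<^sub>m m k) W
    = four_block_mat (mat_adjoint Q * A * Q) (mat_adjoint Q * B * W) (mat_adjoint W * C * Q) (mat_adjoint W * D * W)"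
proof -
  have "mat_adjoint (four_block_mat Q (0\<^sub>m k m) (0\<^sub>m m k) W) = four_block_mat (mat_adjoint Q) (0\<^sub>m k m) (0\<^sub>m m k) (mat_adjoint W)"
    using Q W by (simp add: adj_four_block[OF Q zero_carrier_mat zero_carrier_mat W])
  also have "\<dots> * four_block_mat A B C D = four_block_mat (mat_adjoint Q * A) (mat_adjoint Q * B) (mat_adjoint W * C) (mat_adjoint W * D)"
    by (subst mult_four_block_mat[OF adj_carrier_mat[OF Q] zero_carrier_mat zero_carrier_mat adj_carrier_mat[OF W] A B C D],
        insert A B C D Q W, auto)
  also have "\<dots> * four_block_mat Q (0\<^sub>m k m) (0\<^sub>m m k) W = four_block_mat (mat_adjoint Q * A * Q) (mat_adjoint Q * B * W) (mat_adjoint W * C * Q) (mat_adjoint W * D * W)"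
    by (subst mult_four_block_mat[of _ k k _ m _ m _ _ k _ m]; insert A B C D Q W, auto)
  finally show ?thesis .
qed

lemma uminus_zero_mat[simp]: "- (0\<^sub>m a b :: complex mat) = 0\<^sub>m a b"
  by (rule eq_matI, auto)

lemma det_adj_unitary: assumes "Q \<in> carrier_mat n n" "unitary_mat Q" shows "det (mat_adjoint Q) \<noteq> 0"
proof -
  have "det (mat_adjoint Q * Q) = 1" using unitaryD[OF assms(2,1)] by simp
  hence "det (mat_adjoint Q) * det Q = 1" using assms by (simp add: det_mult[of _ n])
  thus ?thesis by auto
qed



lemma staircase:
  fixes S :: "complex mat"
  assumes "0 < k" "S \<in> carrier_mat (k + m) (k + m)" "skew_hermitian_mat S"
  shows "\<exists>Q W ns. Q \<in> carrier_mat k k \<and> unitary_mat Q \<and> W \<in> carrier_mat m m \<and> unitary_mat W \<and>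
     ns \<noteq> [] \<and> ns ! 0 = k \<and> sum_list ns = k + m \<and>
     stair (mat_adjoint (four_block_mat Q (0\<^sub>m k m) (0\<^sub>m m k) W) * S * four_block_mat Q (0\<^sub>m k m) (0\<^sub>m m k) W) ns"
  using assms
proof (induction m arbitrary: k S rule: less_induct)
  case (less m k S)
  note k = less.prems(1) and S = less.prems(2) and sk = less.prems(3)
  define A1 where "A1 = blk S [k,m] 0 0"
  define B where "B = blk S [k,m] 0 1"
  define C where "C = blk S [k,m] 1 0"
  define S22 where "S22 = blk S [k,m] 1 1"
  have A1: "A1 \<in> carrier_mat k k" and Bc: "B \<in> carrier_mat k m" and Cc: "C \<in> carrier_mat m k"
    and S22: "S22 \<in> carrier_mat m m" unfolding A1_def B_def C_def S22_def by auto
  have Ssplit: "S = four_block_mat A1 B C S22" unfolding A1_def B_def C_def S22_def by (rule blk_split[OF S])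
  have S22sk: "skew_hermitian_mat S22" unfolding S22_def using blk_skew_diag[OF S sk, of "[k,m]" 1] by simp
  show ?case
  proof (cases "C = 0\<^sub>m m k")
    case True
    define U where "U = four_block_mat (1\<^sub>m k) (0\<^sub>m k m) (0\<^sub>m m k) (1\<^sub>m m :: complex mat)"
    have U1: "U = 1\<^sub>m (k + m)" unfolding U_def by simp
    have S': "mat_adjoint U * S * U = S" unfolding U1 using S by simp
    have st: "stair S [k, m]"
    proof -
      have b10: "blk S [k,m] 1 0 = 0\<^sub>m m k" using True unfolding C_def .
      have b01: "blk S [k,m] 0 1 = 0\<^sub>m k m"
        using blk_skew[OF S sk, of "[k,m]" 0 1] b10 by simp
      show ?thesis unfolding stair_def Let_def
        using k b10 b01 blk_skew_diag[OF S sk, of "[k,m]"] by (auto simp: less_Suc_eq)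
    qed
    show ?thesis
      by (rule exI[of _ "1\<^sub>m k"], rule exI[of _ "1\<^sub>m m"], rule exI[of _ "[k,m]"],
          insert st S', unfold U_def, auto simp: unitary_one k)
  next
    case False
    from two_sided[OF Cc] obtain W1 Q1 p \<Sigma> where W1: "W1 \<in> carrier_mat m m" "unitary_mat W1"
      and Q1: "Q1 \<in> carrier_mat k k" "unitary_mat Q1" and p: "p \<le> m" "p \<le> k"
      and Sig: "\<Sigma> \<in> carrier_mat p p" "det \<Sigma> \<noteq> 0"
      and E: "mat_adjoint W1 * C * Q1 = four_block_mat \<Sigma> (0\<^sub>m p (k - p)) (0\<^sub>m (m - p) p) (0\<^sub>m (m - p) (k - p))"
      by blast
    have p0: "0 < p"
    proof (rule ccontr)
      assume "\<not> 0 < p"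
      hence "p = 0" by simp
      hence "mat_adjoint W1 * C * Q1 = 0\<^sub>m m k" unfolding E using Sig p
        by (intro eq_matI, auto simp: four_block_index)
      have Xc: "mat_adjoint W1 * C \<in> carrier_mat m k" using W1 Cc by auto
      have e1: "mat_adjoint W1 * C * Q1 * mat_adjoint Q1 = mat_adjoint W1 * C"
        using assoc_mult_mat[OF Xc Q1(1) adj_carrier_mat[OF Q1(1)]] unitaryD[OF Q1(2,1)] right_mult_one_mat[OF Xc] by simp
      have e2: "W1 * (mat_adjoint W1 * C) = C"
        using assoc_mult_mat[OF W1(1) adj_carrier_mat[OF W1(1)] Cc] unitaryD[OF W1(2,1)] Cc by simp
      have "C = W1 * (mat_adjoint W1 * C * Q1 * mat_adjoint Q1)" using e1 e2 by simp
      also have "\<dots> = 0\<^sub>m m k" unfolding \<open>mat_adjoint W1 * C * Q1 = 0\<^sub>m m k\<close> using W1 Q1 by simp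
      finally have "C = 0\<^sub>m m k" .
      thus False using False by simp
    qed
    define S22' where "S22' = mat_adjoint W1 * S22 * W1"
    have S22'c: "S22' \<in> carrier_mat (p + (m - p)) (p + (m - p))" unfolding S22'_def using W1 S22 p by auto
    have S22'sk: "skew_hermitian_mat S22'" unfolding S22'_def by (rule skew_congr[OF S22 S22sk W1(1)])
    have mp: "m - p < m" using p0 p by simp
    from less.IH[OF mp p0 S22'c S22'sk] obtain Q2 W2 ns' where
      Q2: "Q2 \<in> carrier_mat p p" "unitary_mat Q2" and W2: "W2 \<in> carrier_mat (m - p) (m - p)" "unitary_mat W2"
      and ns': "ns' \<noteq> []" "ns' ! 0 = p" "sum_list ns' = p + (m - p)"
      and st': "stair (mat_adjoint (four_block_mat Q2 (0\<^sub>m p (m - p)) (0\<^sub>m (m - p) p) W2) * S22' *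
                 four_block_mat Q2 (0\<^sub>m p (m - p)) (0\<^sub>m (m - p) p) W2) ns'" by blast
    define U2 where "U2 = four_block_mat Q2 (0\<^sub>m p (m - p)) (0\<^sub>m (m - p) p) W2"
    have U2: "U2 \<in> carrier_mat m m" "unitary_mat U2" unfolding U2_def using Q2 W2 p
      using unitary_diag[OF Q2(2,1) W2(2,1)] by auto
    define S'' where "S'' = mat_adjoint U2 * S22' * U2"
    define W where "W = W1 * U2"
    have W: "W \<in> carrier_mat m m" "unitary_mat W" unfolding W_def using W1 U2 unitary_mult[of W1 m U2] by auto
    define U where "U = four_block_mat Q1 (0\<^sub>m k m) (0\<^sub>m m k) W"
    define S' where "S' = mat_adjoint U * S * U"
    define ns where "ns = k # ns'"
    have snsm: "sum_list ns' = m" using ns' p by simp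
    have adjW: "mat_adjoint W = mat_adjoint U2 * mat_adjoint W1" unfolding W_def using W1 U2 by (simp add: adj_mult[of _ m m])
    have WCQ: "mat_adjoint W * C * Q1 = four_block_mat (mat_adjoint Q2 * \<Sigma>) (0\<^sub>m p (k - p)) (0\<^sub>m (m - p) p) (0\<^sub>m (m - p) (k - p))"
    proof -
      have Xc: "mat_adjoint W1 * C \<in> carrier_mat m k" using W1 Cc by auto
      have "mat_adjoint W * C * Q1 = mat_adjoint U2 * (mat_adjoint W1 * C) * Q1"
        unfolding adjW using assoc_mult_mat[OF adj_carrier_mat[OF U2(1)] adj_carrier_mat[OF W1(1)] Cc] by simp
      also have "\<dots> = mat_adjoint U2 * (mat_adjoint W1 * C * Q1)"
        using assoc_mult_mat[OF adj_carrier_mat[OF U2(1)] Xc Q1(1)] by simp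
      finally have "mat_adjoint W * C * Q1 = mat_adjoint U2 * (mat_adjoint W1 * C * Q1)" .
      also have "\<dots> = four_block_mat (mat_adjoint Q2) (0\<^sub>m p (m - p)) (0\<^sub>m (m - p) p) (mat_adjoint W2) *
           four_block_mat \<Sigma> (0\<^sub>m p (k - p)) (0\<^sub>m (m - p) p) (0\<^sub>m (m - p) (k - p))"
        unfolding E U2_def using Q2 W2 by (simp add: adj_four_block[OF Q2(1) zero_carrier_mat zero_carrier_mat W2(1)])
      also have "\<dots> = four_block_mat (mat_adjoint Q2 * \<Sigma>) (0\<^sub>m p (k - p)) (0\<^sub>m (m - p) p) (0\<^sub>m (m - p) (k - p))"
        by (subst mult_four_block_mat[OF adj_carrier_mat[OF Q2(1)] zero_carrier_mat zero_carrier_mat adj_carrier_mat[OF W2(1)] Sig(1)], insert Q2 W2 Sig, auto)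
      finally show ?thesis .
    qed
    have WSW: "mat_adjoint W * S22 * W = S''"
    proof -
      have Yc: "mat_adjoint W1 * S22 \<in> carrier_mat m m" using W1 S22 by auto
      have "mat_adjoint W * S22 * W = mat_adjoint U2 * (mat_adjoint W1 * S22) * (W1 * U2)"
        unfolding adjW unfolding W_def using assoc_mult_mat[OF adj_carrier_mat[OF U2(1)] adj_carrier_mat[OF W1(1)] S22] by simp
      also have "\<dots> = mat_adjoint U2 * ((mat_adjoint W1 * S22) * (W1 * U2))"
        using assoc_mult_mat[OF adj_carrier_mat[OF U2(1)] Yc mult_carrier_mat[OF W1(1) U2(1)]] by simp
      also have "(mat_adjoint W1 * S22) * (W1 * U2) = (mat_adjoint W1 * S22 * W1) * U2"
        using assoc_mult_mat[OF Yc W1(1) U2(1)] by simp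
      also have "mat_adjoint U2 * \<dots> = mat_adjoint U2 * (mat_adjoint W1 * S22 * W1) * U2"
        using assoc_mult_mat[OF adj_carrier_mat[OF U2(1)] mult_carrier_mat[OF Yc W1(1)] U2(1)] by simp
      finally have "mat_adjoint W * S22 * W = mat_adjoint U2 * (mat_adjoint W1 * S22 * W1) * U2" .
      thus ?thesis unfolding S''_def S22'_def .
    qed
    have S'fb: "S' = four_block_mat (mat_adjoint Q1 * A1 * Q1) (mat_adjoint Q1 * B * W) (mat_adjoint W * C * Q1) S''"
      unfolding S'_def U_def Ssplit WSW[symmetric] by (rule fb_congr[OF A1 Bc Cc S22 Q1(1) W(1)])
    have S'c: "S' \<in> carrier_mat (k + m) (k + m)" unfolding S'_def U_def using S Q1 W by auto
    have S'sk: "skew_hermitian_mat S'" unfolding S'_def by (rule skew_congr[OF S sk], unfold U_def, insert Q1 W, auto)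
    have sns: "sum_list ns = k + m" unfolding ns_def using snsm by simp
    have S''c: "S'' \<in> carrier_mat m m" unfolding S''_def using S22'c U2 p by auto
    have A1': "mat_adjoint Q1 * A1 * Q1 \<in> carrier_mat k k" using Q1 A1 by auto
    have B': "mat_adjoint Q1 * B * W \<in> carrier_mat k m" using Q1 Bc W by auto
    have C': "mat_adjoint W * C * Q1 \<in> carrier_mat m k" using Q1 Cc W by auto
    define r' where "r' = length ns'"
    have r'0: "0 < r'" using ns' unfolding r'_def by simp
    have F1: "\<And>i j. i < r' \<Longrightarrow> j < r' \<Longrightarrow> blk S' ns (Suc i) (Suc j) = blk S'' ns' i j"
      unfolding S'fb ns_def r'_def by (rule blk_fb_SS[OF A1' B' C' S''c snsm])
    have F0: "\<And>i. i < r' \<Longrightarrow> blk S' ns (Suc i) 0 = mat (ns' ! i) k (\<lambda>(a,b). (mat_adjoint W * C * Q1) $$ (blk_off ns' i + a, b))"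
      unfolding S'fb ns_def r'_def by (rule blk_fb_S0[OF A1' B' C' S''c snsm])
    have F2: "blk S' ns 1 0 = append_cols (mat_adjoint Q2 * \<Sigma>) (0\<^sub>m p (k - p))"
    proof -
      have "blk S' ns 1 0 = mat (ns' ! 0) k (\<lambda>(a,b). (mat_adjoint W * C * Q1) $$ (blk_off ns' 0 + a, b))"
        using F0[OF r'0] by simp
      also have "\<dots> = append_cols (mat_adjoint Q2 * \<Sigma>) (0\<^sub>m p (k - p))"
        unfolding WCQ ns'(2) using Q2 Sig p
        by (intro eq_matI, auto simp: four_block_index append_cols_index)
      finally show ?thesis .
    qed
    have F3: "\<And>i. 1 \<le> i \<Longrightarrow> i < r' \<Longrightarrow> blk S' ns (Suc i) 0 = 0\<^sub>m (ns' ! i) k"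
    proof -
      fix i assume i: "1 \<le> i" "i < r'"
      have off: "p \<le> blk_off ns' i" using blk_off_mono[of 0 i ns'] i ns' unfolding r'_def by simp
      have bnd: "blk_off ns' i + ns' ! i \<le> m" using blk_off_bound[of i ns'] i snsm unfolding r'_def by simp
      show "blk S' ns (Suc i) 0 = 0\<^sub>m (ns' ! i) k"
        unfolding F0[OF i(2)] WCQ using off bnd Q2 Sig p
        by (intro eq_matI, auto simp: four_block_index)
    qed
    have F5: "\<And>i j. i < Suc r' \<Longrightarrow> j < Suc r' \<Longrightarrow> blk S' ns i j = - mat_adjoint (blk S' ns j i)"
      by (rule blk_skew[OF S'c S'sk sns], auto simp: ns_def r'_def)
    have F3': "\<And>i. 1 \<le> i \<Longrightarrow> i < r' \<Longrightarrow> blk S' ns 0 (Suc i) = 0\<^sub>m k (ns' ! i)"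
    proof -
      fix i assume i: "1 \<le> i" "i < r'"
      have "blk S' ns 0 (Suc i) = - mat_adjoint (blk S' ns (Suc i) 0)" using F5[of 0 "Suc i"] i by simp
      thus "blk S' ns 0 (Suc i) = 0\<^sub>m k (ns' ! i)" unfolding F3[OF i] by simp
    qed
    have lenns: "length ns = Suc r'" unfolding ns_def r'_def by simp
    note st'' = st'[folded U2_def S''_def, unfolded stair_def Let_def, folded r'_def]
    have r'2: "r' \<ge> 2" using st'' by simp
    have "stair S' ns"
      unfolding stair_def Let_def lenns
    proof (intro conjI allI impI)
      show "2 \<le> Suc r'" using r'2 by simp
    next
      fix i j assume ij: "i \<le> j \<and> j < Suc r' - 1"
      show "ns ! j \<le> ns ! i"
      proof (cases i)
        case 0
        show ?thesis
        proof (cases j)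
          case (Suc j')
          have "ns' ! j' \<le> ns' ! 0" using st'' ij Suc by auto
          thus ?thesis using 0 Suc ns' p unfolding ns_def by simp
        qed (insert 0, simp)
      next
        case (Suc i')
        then obtain j' where j: "j = Suc j'" using ij by (cases j, auto)
        show ?thesis using st'' ij Suc j unfolding ns_def by auto
      qed
    next
      fix i assume i: "i < Suc r' - 1"
      show "0 < ns ! i" using st'' i k unfolding ns_def by (cases i, auto)
    next
      fix i j assume i: "i < Suc r'" and j: "j < Suc r'" and ij: "i + 1 < j \<or> j + 1 < i"
      show "blk S' ns i j = 0\<^sub>m (ns ! i) (ns ! j)"
      proof (cases i)
        case 0
        then obtain j' where j': "j = Suc j'" "1 \<le> j'" using ij by (cases j, auto)
        thus ?thesis using F3'[of j'] j 0 unfolding ns_def by simp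
      next
        case (Suc i')
        show ?thesis
        proof (cases j)
          case 0
          thus ?thesis using F3[of i'] i ij Suc unfolding ns_def by simp
        next
          case (Suc j')
          thus ?thesis using F1[of i' j'] st'' i j ij \<open>i = Suc i'\<close> unfolding ns_def by auto
        qed
      qed
    next
      fix i assume i: "i < Suc r' - 1"
      have last: "Suc r' - 1 = Suc (r' - 1)" using r'2 by simp
      show "blk S' ns i (Suc r' - 1) = 0\<^sub>m (ns ! i) (ns ! (Suc r' - 1))"
      proof (cases i)
        case 0 thus ?thesis unfolding last using F3'[of "r' - 1"] r'2 unfolding ns_def by simp
      next
        case (Suc i')
        thus ?thesis unfolding last using F1[of i' "r' - 1"] st'' i r'2 unfolding ns_def by auto
      qed
    next
      fix i assume i: "i < Suc r' - 1"
      have last: "Suc r' - 1 = Suc (r' - 1)" using r'2 by simp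
      show "blk S' ns (Suc r' - 1) i = 0\<^sub>m (ns ! (Suc r' - 1)) (ns ! i)"
      proof (cases i)
        case 0 thus ?thesis unfolding last using F3[of "r' - 1"] r'2 unfolding ns_def by simp
      next
        case (Suc i')
        thus ?thesis unfolding last using F1[of "r' - 1" i'] st'' i r'2 unfolding ns_def by auto
      qed
    next
      fix i assume i: "i < Suc r'"
      show "skew_hermitian_mat (blk S' ns i i)" by (rule blk_skew_diag[OF S'c S'sk sns], insert i lenns, simp)
    next
      fix i assume i: "1 \<le> i \<and> i < Suc r' - 1"
      have "i < Suc r'" "i - 1 < Suc r'" using i by auto
      thus "blk S' ns i (i - 1) = - mat_adjoint (blk S' ns (i - 1) i)" using F5 by blast
    next
      fix i assume i: "1 \<le> i \<and> i < Suc r' - 1"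
      show "\<exists>\<Sigma>. \<Sigma> \<in> carrier_mat (ns ! i) (ns ! i) \<and> det \<Sigma> \<noteq> 0 \<and>
          blk S' ns i (i - 1) = append_cols \<Sigma> (0\<^sub>m (ns ! i) (ns ! (i - 1) - ns ! i))"
      proof (cases "i = 1")
        case True
        have "det (mat_adjoint Q2 * \<Sigma>) \<noteq> 0" using det_adj_unitary[OF Q2] Sig Q2
          by (simp add: det_mult[of _ p])
        thus ?thesis using True F2 Q2 Sig ns' unfolding ns_def
          by (intro exI[of _ "mat_adjoint Q2 * \<Sigma>"], auto)
      next
        case False
        then obtain i'' where i'': "i = Suc (Suc i'')" using i by (cases i; cases "i - 1", auto)
        have "blk S' ns i (i - 1) = blk S'' ns' (Suc i'') i''" using F1[of "Suc i''" i''] i i'' by simp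
        moreover have "\<exists>\<Sigma>. \<Sigma> \<in> carrier_mat (ns' ! Suc i'') (ns' ! Suc i'') \<and> det \<Sigma> \<noteq> 0 \<and>
          blk S'' ns' (Suc i'') i'' = append_cols \<Sigma> (0\<^sub>m (ns' ! Suc i'') (ns' ! i'' - ns' ! Suc i''))"
        proof -
          have st7: "\<forall>i. 1 \<le> i \<and> i < r' - 1 \<longrightarrow>
            blk S'' ns' i (i - 1) = - mat_adjoint (blk S'' ns' (i - 1) i) \<and>
            (\<exists>\<Sigma>. \<Sigma> \<in> carrier_mat (ns' ! i) (ns' ! i) \<and> det \<Sigma> \<noteq> 0 \<and>
              blk S'' ns' i (i - 1) = append_cols \<Sigma> (0\<^sub>m (ns' ! i) (ns' ! (i - 1) - ns' ! i)))"
            using st'' by blast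
          have "1 \<le> Suc i'' \<and> Suc i'' < r' - 1" using i i'' by simp
          from st7[rule_format, OF this] have "\<exists>\<Sigma>. \<Sigma> \<in> carrier_mat (ns' ! Suc i'') (ns' ! Suc i'') \<and> det \<Sigma> \<noteq> 0 \<and>
              blk S'' ns' (Suc i'') (Suc i'' - 1) = append_cols \<Sigma> (0\<^sub>m (ns' ! Suc i'') (ns' ! (Suc i'' - 1) - ns' ! Suc i''))"
            by blast
          thus ?thesis by simp
        qed
        ultimately show ?thesis using i'' unfolding ns_def by simp
      qed
    qed
    thus ?thesis unfolding S'_def U_def using Q1 W sns
      by (intro exI[of _ Q1] exI[of _ W] exI[of _ ns], auto simp: ns_def)
  qed
qed



lemma adj_inner: assumes A: "A \<in> carrier_mat n m" and v: "v \<in> carrier_vec m" and w: "w \<in> carrier_vec n"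
  shows "conjugate v \<bullet> (mat_adjoint A *\<^sub>v w) = conjugate (A *\<^sub>v v) \<bullet> (w :: complex vec)"
proof -
  have "conjugate v \<bullet> (mat_adjoint A *\<^sub>v w) = (\<Sum>i = 0..<m. cnj (v $ i) * (\<Sum>j = 0..<n. cnj (A $$ (j, i)) * w $ j))"
    using A v w by (simp add: scalar_prod_def)
  also have "\<dots> = (\<Sum>i = 0..<m. \<Sum>j = 0..<n. cnj (v $ i) * cnj (A $$ (j, i)) * w $ j)"
    by (simp add: sum_distrib_left mult.assoc)
  also have "\<dots> = (\<Sum>j = 0..<n. \<Sum>i = 0..<m. cnj (v $ i) * cnj (A $$ (j, i)) * w $ j)"
    by (rule sum.swap)
  also have "\<dots> = (\<Sum>j = 0..<n. cnj (\<Sum>i = 0..<m. A $$ (j, i) * v $ i) * w $ j)"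
    by (rule sum.cong[OF refl], simp add: sum_distrib_right sum_distrib_left mult_ac)
  also have "\<dots> = conjugate (A *\<^sub>v v) \<bullet> w"
    using A v w by (simp add: scalar_prod_def)
  finally show ?thesis .
qed

lemma herm_congr: assumes H: "H \<in> carrier_mat n n" and h: "hermitian_mat H" and U: "U \<in> carrier_mat n m"
  shows "hermitian_mat (mat_adjoint U * H * U)"
proof -
  have "mat_adjoint (mat_adjoint U * H * U) = mat_adjoint U * mat_adjoint (mat_adjoint U * H)"
    using H U by (subst adj_mult[of _ m n], auto)
  also have "mat_adjoint (mat_adjoint U * H) = mat_adjoint H * U"
    using H U by (subst adj_mult[of _ m n], auto)
  also have "mat_adjoint U * (mat_adjoint H * U) = mat_adjoint U * mat_adjoint H * U"
    using H U by (simp add: assoc_mult_mat[of _ m n _ n _ m])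
  also have "\<dots> = mat_adjoint U * H * U" using h unfolding hermitian_mat_def by auto
  finally show ?thesis unfolding hermitian_mat_def using H U by simp
qed

lemma real_sq: "Im (conjugate y \<bullet> (y :: complex vec)) = 0" "Re (conjugate y \<bullet> (y :: complex vec)) \<ge> 0"
proof -
  have e: "conjugate y \<bullet> y = (\<Sum>i = 0..<dim_vec y. cnj (y $ i) * y $ i)" by (simp add: scalar_prod_def)
  show "Im (conjugate y \<bullet> (y :: complex vec)) = 0" unfolding e by (simp add: Im_sum)
  have "Re (conjugate y \<bullet> y) = (\<Sum>i = 0..<dim_vec y. (cmod (y $ i))^2)"
    unfolding e Re_sum by (rule sum.cong, simp, subst cmod_power2, simp add: power2_eq_square)
  thus "Re (conjugate y \<bullet> (y :: complex vec)) \<ge> 0" by (simp add: sum_nonneg)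
qed

lemma neg_quad: fixes a c :: real assumes a: "a > 0" and c: "c \<ge> 0" shows "2 * (- a / (c + 1)) * a + (- a / (c + 1))^2 * c < 0"
proof -
  define t where "t = - a / (c + 1)"
  have t0: "t < 0" unfolding t_def using a c by simp
  have "t * (c + 1) = - a" unfolding t_def using c by simp
  hence tc: "t * c = - a - t" by (simp add: algebra_simps)
  have "2 * a + t * c > 0" unfolding tc using a t0 by simp
  hence "t * (2 * a + t * c) < 0" using t0 by (simp add: mult_neg_pos)
  also have "t * (2 * a + t * c) = 2 * t * a + t^2 * c" by (simp add: algebra_simps power2_eq_square)
  finally show ?thesis unfolding t_def .
qed

lemma psd_zero: assumes H: "H \<in> carrier_mat n n" and psd: "psd_mat H" and x: "x \<in> carrier_vec n"
  and z: "Re (conjugate x \<bullet> (H *\<^sub>v x)) = 0"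
  shows "H *\<^sub>v x = 0\<^sub>v n"
proof -
  define y where "y = H *\<^sub>v x"
  have y: "y \<in> carrier_vec n" unfolding y_def using H x by auto
  have adjH: "mat_adjoint H = H" using psd unfolding psd_mat_def hermitian_mat_def by auto
  define a where "a = Re (conjugate y \<bullet> y)"
  define c where "c = Re (conjugate y \<bullet> (H *\<^sub>v y))"
  have a0: "a \<ge> 0" unfolding a_def by (rule real_sq)
  have c0: "c \<ge> 0" unfolding c_def using psd y H unfolding psd_mat_def by auto
  have xy: "conjugate x \<bullet> (H *\<^sub>v y) = conjugate y \<bullet> y"
    using adj_inner[OF H x y] unfolding adjH y_def .
  have key: "\<And>t :: real. 0 \<le> 2 * t * a + t^2 * c"
  proof -
    fix t :: real
    define z where "z = x + complex_of_real t \<cdot>\<^sub>v y"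
    have zc: "z \<in> carrier_vec n" unfolding z_def using x y by auto
    have "0 \<le> Re (conjugate z \<bullet> (H *\<^sub>v z))" using psd zc H unfolding psd_mat_def by auto
    also have "conjugate z \<bullet> (H *\<^sub>v z) = conjugate x \<bullet> (H *\<^sub>v x) + complex_of_real t * (conjugate x \<bullet> (H *\<^sub>v y))
       + complex_of_real t * (conjugate y \<bullet> (H *\<^sub>v x)) + complex_of_real t * complex_of_real t * (conjugate y \<bullet> (H *\<^sub>v y))"
      unfolding z_def using x y H
      by (simp add: conjugate_add_vec[of _ n] conjugate_smult_vec mult_add_distrib_mat_vec[of _ n n] mult_mat_vec[of _ n n]
          add_scalar_prod_distrib[of _ n] scalar_prod_add_distrib[of _ n] smult_scalar_prod_distrib[of _ n]
          scalar_prod_smult_distrib[of _ n] algebra_simps)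
    also have "Re \<dots> = 2 * t * a + t^2 * c"
      unfolding xy y_def[symmetric] a_def c_def using z[folded y_def] by (simp add: power2_eq_square)
    finally show "0 \<le> 2 * t * a + t^2 * c" .
  qed
  have "a = 0"
  proof (rule ccontr)
    assume "a \<noteq> 0"
    hence ap: "a > 0" using a0 by simp
    have "0 \<le> 2 * (- a / (c + 1)) * a + (- a / (c + 1))^2 * c" by (rule key)
    also have "\<dots> < 0" by (rule neg_quad[OF ap c0])
    finally show False by simp
  qed
  hence "conjugate y \<bullet> y = 0" using real_sq(1)[of y] unfolding a_def by (simp add: complex_eq_iff)
  hence "y \<bullet>c y = 0" using y by (simp add: comm_scalar_prod[of _ n])
  thus ?thesis using y unfolding y_def by simp
qed



lemma conj_append: "conjugate (v @\<^sub>v w) = conjugate v @\<^sub>v conjugate (w :: complex vec)"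
  by (rule eq_vecI, auto)

lemma H_decomp: fixes H :: "complex mat"
  assumes H: "H \<in> carrier_mat n n" and psd: "psd_mat H" and H0: "H \<noteq> 0\<^sub>m n n"
  shows "\<exists>U0 k H11. U0 \<in> carrier_mat n n \<and> unitary_mat U0 \<and> 0 < k \<and> k \<le> n \<and> H11 \<in> carrier_mat k k \<and>
    pd_mat H11 \<and> mat_adjoint U0 * H * U0 = four_block_mat H11 (0\<^sub>m k (n - k)) (0\<^sub>m (n - k) k) (0\<^sub>m (n - k) (n - k))"
proof -
  from col_compress[OF H] obtain W k X where W: "W \<in> carrier_mat n n" "unitary_mat W" and kn: "k \<le> n"
    and X: "X \<in> carrier_mat n k" "inj_mat X" and HW: "H * W = append_cols X (0\<^sub>m n (n - k))" by blast
  define G where "G = mat_adjoint W * H * W"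
  have Gc: "G \<in> carrier_mat n n" unfolding G_def using W H by auto
  have herm: "hermitian_mat H" using psd unfolding psd_mat_def by auto
  have Gh: "hermitian_mat G" unfolding G_def by (rule herm_congr[OF H herm W(1)])
  have G_app: "G = append_cols (mat_adjoint W * X) (0\<^sub>m n (n - k))"
  proof -
    have "G = mat_adjoint W * (H * W)" unfolding G_def using assoc_mult_mat[OF adj_carrier_mat[OF W(1)] H W(1)] .
    also have "\<dots> = append_cols (mat_adjoint W * X) (mat_adjoint W * 0\<^sub>m n (n - k))"
      unfolding HW by (rule mult_append_cols[OF adj_carrier_mat[OF W(1)] X(1)], auto)
    also have "mat_adjoint W * 0\<^sub>m n (n - k) = 0\<^sub>m n (n - k)" using W by simp
    finally show ?thesis .
  qed
  have Gz: "\<And>i j. i < n \<Longrightarrow> k \<le> j \<Longrightarrow> j < n \<Longrightarrow> G $$ (i, j) = 0"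
    unfolding G_app using W X kn by (simp add: append_cols_index)
  have Gsym: "\<And>i j. i < n \<Longrightarrow> j < n \<Longrightarrow> G $$ (i, j) = cnj (G $$ (j, i))"
  proof -
    fix i j assume ij: "i < n" "j < n"
    have "mat_adjoint G $$ (i, j) = G $$ (i, j)" using Gh unfolding hermitian_mat_def by simp
    thus "G $$ (i, j) = cnj (G $$ (j, i))" using ij Gc by simp
  qed
  define H11 where "H11 = mat k k (\<lambda>(a, b). G $$ (a, b))"
  have H11c: "H11 \<in> carrier_mat k k" unfolding H11_def by auto
  have Gfb: "G = four_block_mat H11 (0\<^sub>m k (n - k)) (0\<^sub>m (n - k) k) (0\<^sub>m (n - k) (n - k))"
  proof (rule eq_matI)
    fix i j assume ij: "i < dim_row (four_block_mat H11 (0\<^sub>m k (n - k)) (0\<^sub>m (n - k) k) (0\<^sub>m (n - k) (n - k)))"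
      "j < dim_col (four_block_mat H11 (0\<^sub>m k (n - k)) (0\<^sub>m (n - k) k) (0\<^sub>m (n - k) (n - k)))"
    hence i: "i < n" and j: "j < n" using kn H11c by auto
    show "G $$ (i, j) = four_block_mat H11 (0\<^sub>m k (n - k)) (0\<^sub>m (n - k) k) (0\<^sub>m (n - k) (n - k)) $$ (i, j)"
    proof (cases "j < k")
      case True
      show ?thesis
      proof (cases "i < k")
        case True
        thus ?thesis using \<open>j < k\<close> i j H11c kn by (simp add: four_block_index H11_def)
      next
        case False
        hence "G $$ (i, j) = 0" using Gsym[OF i j] Gz[OF j _ i] by simp
        thus ?thesis using False \<open>j < k\<close> i j H11c kn by (simp add: four_block_index)
      qed
    next
      case False
      thus ?thesis using Gz[OF i _ j] i j H11c kn by (simp add: four_block_index)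
    qed
  qed (insert Gc kn H11c, auto)
  have k0: "0 < k"
  proof (rule ccontr)
    assume "\<not> 0 < k"
    hence k0: "k = 0" by simp
    have "G = 0\<^sub>m n n" using Gz Gc k0 by (intro eq_matI, auto)
    have e0: "W * G = H * W"
    proof -
      have "W * G = W * (mat_adjoint W * H * W)" unfolding G_def ..
      also have "\<dots> = W * (mat_adjoint W * H) * W"
        using assoc_mult_mat[OF W(1) mult_carrier_mat[OF adj_carrier_mat[OF W(1)] H] W(1)] by simp
      also have "W * (mat_adjoint W * H) = (W * mat_adjoint W) * H"
        using assoc_mult_mat[OF W(1) adj_carrier_mat[OF W(1)] H] by simp
      also have "\<dots> = H" using unitaryD[OF W(2,1)] H by simp
      finally show ?thesis .
    qed
    have e1: "W * G * mat_adjoint W = H"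
    proof -
      have "W * G * mat_adjoint W = H * (W * mat_adjoint W)"
        unfolding e0 using assoc_mult_mat[OF H W(1) adj_carrier_mat[OF W(1)]] by simp
      also have "\<dots> = H" using unitaryD[OF W(2,1)] H by simp
      finally show ?thesis .
    qed
    hence "H = 0\<^sub>m n n" using \<open>G = 0\<^sub>m n n\<close> W by simp
    with H0 show False by simp
  qed
  have pd: "pd_mat H11" unfolding pd_mat_def
  proof (intro conjI ballI impI)
    show "hermitian_mat H11" unfolding hermitian_mat_def
    proof (intro conjI eq_matI)
      fix a b assume "a < dim_row H11" "b < dim_col H11"
      hence ab: "a < k" "b < k" using H11c by auto
      have "cnj (G $$ (b, a)) = G $$ (a, b)" using Gsym[of a b] ab kn by simp
      thus "mat_adjoint H11 $$ (a, b) = H11 $$ (a, b)" using ab H11c by (simp add: H11_def)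
    qed (insert H11c, auto)
  next
    fix v :: "complex vec" assume v: "v \<in> carrier_vec (dim_row H11)" and v0: "v \<noteq> 0\<^sub>v (dim_row H11)"
    have vc: "v \<in> carrier_vec k" using v H11c by simp
    define u where "u = v @\<^sub>v 0\<^sub>v (n - k)"
    have "dim_vec u = n" unfolding u_def using vc kn by simp
    hence uc: "u \<in> carrier_vec n" by (rule carrier_vecI)
    define x where "x = W *\<^sub>v u"
    have xc: "x \<in> carrier_vec n" unfolding x_def using W uc by auto
    have Gu: "G *\<^sub>v u = (H11 *\<^sub>v v) @\<^sub>v 0\<^sub>v (n - k)"
      unfolding Gfb u_def
      by (subst four_block_mat_mult_vec[OF H11c zero_carrier_mat zero_carrier_mat zero_carrier_mat vc zero_carrier_vec],
          insert H11c vc, auto)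
    have "conjugate x \<bullet> (H *\<^sub>v x) = conjugate u \<bullet> (mat_adjoint W *\<^sub>v (H *\<^sub>v x))"
      unfolding x_def using adj_inner[OF W(1) uc, of "H *\<^sub>v (W *\<^sub>v u)"] W H uc by simp
    also have "mat_adjoint W *\<^sub>v (H *\<^sub>v x) = G *\<^sub>v u"
      unfolding x_def G_def
      using assoc_mult_mat_vec[OF mult_carrier_mat[OF adj_carrier_mat[OF W(1)] H] W(1) uc]
        assoc_mult_mat_vec[OF adj_carrier_mat[OF W(1)] H mult_mat_vec_carrier[OF W(1) uc]] by simp
    also have "conjugate u \<bullet> (G *\<^sub>v u) = conjugate u \<bullet> ((H11 *\<^sub>v v) @\<^sub>v 0\<^sub>v (n - k))"
      unfolding Gu ..
    also have "\<dots> = conjugate v \<bullet> (H11 *\<^sub>v v)"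
      unfolding u_def conj_append using vc H11c
      by (subst scalar_prod_append[of _ k _ "n - k"], auto)
    finally have eq: "conjugate x \<bullet> (H *\<^sub>v x) = conjugate v \<bullet> (H11 *\<^sub>v v)" .
    have ge: "Re (conjugate v \<bullet> (H11 *\<^sub>v v)) \<ge> 0" using psd xc H unfolding eq[symmetric] psd_mat_def by auto
    show "Re (conjugate v \<bullet> (H11 *\<^sub>v v)) > 0"
    proof (rule ccontr)
      assume "\<not> Re (conjugate v \<bullet> (H11 *\<^sub>v v)) > 0"
      hence "Re (conjugate x \<bullet> (H *\<^sub>v x)) = 0" using ge eq by simp
      from psd_zero[OF H psd xc this] have Hx: "H *\<^sub>v x = 0\<^sub>v n" .
      have "H *\<^sub>v x = (H * W) *\<^sub>v u" unfolding x_def using H W uc by (simp add: assoc_mult_mat_vec[of _ n n _ n])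
      also have "\<dots> = (X *\<^sub>v v + 0\<^sub>m n (n - k) *\<^sub>v 0\<^sub>v (n - k)) @\<^sub>v (0\<^sub>m 0 k *\<^sub>v v + 0\<^sub>m 0 (n - k) *\<^sub>v 0\<^sub>v (n - k))"
        unfolding HW u_def append_cols_def using X(1) apply simp
        by (rule four_block_mat_mult_vec[OF X(1) zero_carrier_mat zero_carrier_mat zero_carrier_mat vc zero_carrier_vec])
      finally have "(X *\<^sub>v v + 0\<^sub>m n (n - k) *\<^sub>v 0\<^sub>v (n - k)) @\<^sub>v (0\<^sub>m 0 k *\<^sub>v v + 0\<^sub>m 0 (n - k) *\<^sub>v 0\<^sub>v (n - k)) = 0\<^sub>v n"
        using Hx by simp
      note eqv = this
      have "X *\<^sub>v v = 0\<^sub>v n"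
      proof (rule eq_vecI)
        fix i assume "i < dim_vec (0\<^sub>v n :: complex vec)"
        hence i: "i < n" by simp
        have "((X *\<^sub>v v + 0\<^sub>m n (n - k) *\<^sub>v 0\<^sub>v (n - k)) @\<^sub>v (0\<^sub>m 0 k *\<^sub>v v + 0\<^sub>m 0 (n - k) *\<^sub>v 0\<^sub>v (n - k))) $ i = 0\<^sub>v n $ i"
          unfolding eqv ..
        thus "(X *\<^sub>v v) $ i = 0\<^sub>v n $ i" using i X(1) vc by simp
      qed (insert X(1), simp)
      hence "v = 0\<^sub>v k" using X vc unfolding inj_mat_def by auto
      thus False using v0 H11c by simp
    qed
  qed
  show ?thesis using W k0 kn H11c pd Gfb unfolding G_def by blast
qed



lemma pd_congr: assumes H: "H \<in> carrier_mat k k" and pd: "pd_mat H" and Q: "Q \<in> carrier_mat k k" "unitary_mat Q"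
  shows "pd_mat (mat_adjoint Q * H * Q)"
  unfolding pd_mat_def
proof (intro conjI ballI impI)
  show "hermitian_mat (mat_adjoint Q * H * Q)"
    by (rule herm_congr[OF H _ Q(1)], insert pd, auto simp: pd_mat_def)
next
  fix v :: "complex vec" assume v: "v \<in> carrier_vec (dim_row (mat_adjoint Q * H * Q))"
    and v0: "v \<noteq> 0\<^sub>v (dim_row (mat_adjoint Q * H * Q))"
  have vc: "v \<in> carrier_vec k" using v Q by simp
  have v0': "v \<noteq> 0\<^sub>v k" using v0 Q by simp
  define w where "w = Q *\<^sub>v v"
  have wc: "w \<in> carrier_vec k" unfolding w_def using Q vc by auto
  have "(mat_adjoint Q * H * Q) *\<^sub>v v = mat_adjoint Q *\<^sub>v (H *\<^sub>v w)"
    unfolding w_def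
    using assoc_mult_mat_vec[OF mult_carrier_mat[OF adj_carrier_mat[OF Q(1)] H] Q(1) vc]
        assoc_mult_mat_vec[OF adj_carrier_mat[OF Q(1)] H mult_mat_vec_carrier[OF Q(1) vc]] by simp
  hence eq: "conjugate v \<bullet> ((mat_adjoint Q * H * Q) *\<^sub>v v) = conjugate w \<bullet> (H *\<^sub>v w)"
    using adj_inner[OF Q(1) vc, of "H *\<^sub>v w"] H wc unfolding w_def by simp
  have "w \<noteq> 0\<^sub>v k"
  proof
    assume "w = 0\<^sub>v k"
    hence "mat_adjoint Q *\<^sub>v w = 0\<^sub>v k" using Q by (intro eq_vecI, auto)
    moreover have "mat_adjoint Q *\<^sub>v w = v" unfolding w_def
      using assoc_mult_mat_vec[OF adj_carrier_mat[OF Q(1)] Q(1) vc, symmetric] unitaryD[OF Q(2,1)] vc by simp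
    ultimately show False using v0' by simp
  qed
  thus "0 < Re (conjugate v \<bullet> ((mat_adjoint Q * H * Q) *\<^sub>v v))"
    unfolding eq using pd wc H unfolding pd_mat_def by auto
qed

theorem lemma4p1:
  fixes A H S :: "complex mat" and n :: nat
  assumes "H \<in> carrier_mat n n" and "S \<in> carrier_mat n n"
    and "A = H + S"
    and "psd_mat H" and "H \<noteq> 0\<^sub>m n n"
    and "skew_hermitian_mat S" and "S \<noteq> 0\<^sub>m n n"
  shows "\<exists>U ns. U \<in> carrier_mat n n \<and> unitary_mat U \<and>
     (let r = length ns; H' = mat_adjoint U * H * U; S' = mat_adjoint U * S * U in
       r \<ge> 2 \<and>
       (\<forall>i j. i \<le> j \<and> j < r - 1 \<longrightarrow> ns ! j \<le> ns ! i) \<and>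
       (\<forall>i < r - 1. ns ! i > 0) \<and>
       sum_list ns = n \<and>
       H' = four_block_mat (blk H' ns 0 0) (0\<^sub>m (ns ! 0) (n - ns ! 0))
                           (0\<^sub>m (n - ns ! 0) (ns ! 0)) (0\<^sub>m (n - ns ! 0) (n - ns ! 0)) \<and>
       pd_mat (blk H' ns 0 0) \<and>
       (\<forall>i < r. \<forall>j < r. (i + 1 < j \<or> j + 1 < i) \<longrightarrow>
           blk S' ns i j = 0\<^sub>m (ns ! i) (ns ! j)) \<and>
       (\<forall>i < r - 1. blk S' ns i (r - 1) = 0\<^sub>m (ns ! i) (ns ! (r - 1)) \<and>
                    blk S' ns (r - 1) i = 0\<^sub>m (ns ! (r - 1)) (ns ! i)) \<and>
       (\<forall>i < r. skew_hermitian_mat (blk S' ns i i)) \<and>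
       (\<forall>i. 1 \<le> i \<and> i < r - 1 \<longrightarrow>
           blk S' ns i (i - 1) = - mat_adjoint (blk S' ns (i - 1) i) \<and>
           (\<exists>\<Sigma>. \<Sigma> \<in> carrier_mat (ns ! i) (ns ! i) \<and> det \<Sigma> \<noteq> 0 \<and>
              blk S' ns i (i - 1) = append_cols \<Sigma> (0\<^sub>m (ns ! i) (ns ! (i - 1) - ns ! i)))))"
proof -
  note Hc = assms(1) and Sc = assms(2) and psd = assms(4) and Hn0 = assms(5) and sk = assms(6)
  from H_decomp[OF Hc psd Hn0] obtain U0 k H11 where U0: "U0 \<in> carrier_mat n n" "unitary_mat U0"
    and k: "0 < k" "k \<le> n" and H11: "H11 \<in> carrier_mat k k" "pd_mat H11"
    and HU0: "mat_adjoint U0 * H * U0 = four_block_mat H11 (0\<^sub>m k (n - k)) (0\<^sub>m (n - k) k) (0\<^sub>m (n - k) (n - k))"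
    by blast
  define m where "m = n - k"
  have nkm: "n = k + m" unfolding m_def using k by simp
  define S0 where "S0 = mat_adjoint U0 * S * U0"
  have S0c: "S0 \<in> carrier_mat (k + m) (k + m)" unfolding S0_def using U0 Sc nkm by auto
  have S0sk: "skew_hermitian_mat S0" unfolding S0_def by (rule skew_congr[OF Sc sk U0(1)])
  from staircase[OF k(1) S0c S0sk] obtain Q W ns where Q: "Q \<in> carrier_mat k k" "unitary_mat Q"
    and W: "W \<in> carrier_mat m m" "unitary_mat W" and ns: "ns \<noteq> []" "ns ! 0 = k" "sum_list ns = k + m"
    and st: "stair (mat_adjoint (four_block_mat Q (0\<^sub>m k m) (0\<^sub>m m k) W) * S0 * four_block_mat Q (0\<^sub>m k m) (0\<^sub>m m k) W) ns"
    by blast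
  define D where "D = four_block_mat Q (0\<^sub>m k m) (0\<^sub>m m k) W"
  have Dc: "D \<in> carrier_mat n n" unfolding D_def nkm using Q W by auto
  have Du: "unitary_mat D" unfolding D_def using unitary_diag[OF Q(2,1) W(2,1)] .
  define U where "U = U0 * D"
  have Uc: "U \<in> carrier_mat n n" unfolding U_def using U0 Dc by auto
  have Uu: "unitary_mat U" unfolding U_def using unitary_mult[OF U0(2,1) Du Dc] .
  have congr: "\<And>M. M \<in> carrier_mat n n \<Longrightarrow> mat_adjoint U * M * U = mat_adjoint D * (mat_adjoint U0 * M * U0) * D"
  proof -
    fix M :: "complex mat" assume M: "M \<in> carrier_mat n n"
    have a: "mat_adjoint U = mat_adjoint D * mat_adjoint U0" unfolding U_def using U0 Dc by (simp add: adj_mult[of _ n n _ n])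
    have Ac: "mat_adjoint D \<in> carrier_mat n n" "mat_adjoint U0 \<in> carrier_mat n n" using Dc U0 by auto
    have "mat_adjoint U * M * U = mat_adjoint D * (mat_adjoint U0 * M) * (U0 * D)"
      unfolding a unfolding U_def using assoc_mult_mat[OF Ac M] by simp
    also have "\<dots> = mat_adjoint D * ((mat_adjoint U0 * M) * (U0 * D))"
      using assoc_mult_mat[OF Ac(1) mult_carrier_mat[OF Ac(2) M] mult_carrier_mat[OF U0(1) Dc]] by simp
    also have "(mat_adjoint U0 * M) * (U0 * D) = (mat_adjoint U0 * M * U0) * D"
      using assoc_mult_mat[OF mult_carrier_mat[OF Ac(2) M] U0(1) Dc] by simp
    also have "mat_adjoint D * \<dots> = mat_adjoint D * (mat_adjoint U0 * M * U0) * D"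
      using assoc_mult_mat[OF Ac(1) mult_carrier_mat[OF mult_carrier_mat[OF Ac(2) M] U0(1)] Dc] by simp
    finally show "mat_adjoint U * M * U = mat_adjoint D * (mat_adjoint U0 * M * U0) * D" .
  qed
  have S'eq: "mat_adjoint U * S * U = mat_adjoint D * S0 * D" unfolding S0_def by (rule congr[OF Sc])
  define H11' where "H11' = mat_adjoint Q * H11 * Q"
  have H11'c: "H11' \<in> carrier_mat k k" unfolding H11'_def using Q H11 by auto
  have H'eq: "mat_adjoint U * H * U = four_block_mat H11' (0\<^sub>m k m) (0\<^sub>m m k) (0\<^sub>m m m)"
  proof -
    have "mat_adjoint U * H * U = mat_adjoint D * four_block_mat H11 (0\<^sub>m k m) (0\<^sub>m m k) (0\<^sub>m m m) * D"
      unfolding congr[OF Hc] HU0 m_def ..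
    also have "\<dots> = four_block_mat H11' (mat_adjoint Q * 0\<^sub>m k m * W) (mat_adjoint W * 0\<^sub>m m k * Q) (mat_adjoint W * 0\<^sub>m m m * W)"
      unfolding D_def H11'_def by (rule fb_congr[OF H11(1) zero_carrier_mat zero_carrier_mat zero_carrier_mat Q(1) W(1)])
    also have "\<dots> = four_block_mat H11' (0\<^sub>m k m) (0\<^sub>m m k) (0\<^sub>m m m)" using Q W by simp
    finally show ?thesis .
  qed
  obtain ns' where ns': "ns = k # ns'" using ns by (cases ns, auto)
  have sns': "sum_list ns' = m" using ns ns' by simp
  have blk00: "blk (mat_adjoint U * H * U) ns 0 0 = H11'"
    unfolding H'eq ns' by (rule blk_fb_00[OF H11'c zero_carrier_mat zero_carrier_mat zero_carrier_mat sns'])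
  have pd': "pd_mat H11'" unfolding H11'_def by (rule pd_congr[OF H11 Q])
  have stu: "2 \<le> length ns \<and>
   (\<forall>i j. i \<le> j \<and> j < length ns - 1 \<longrightarrow> ns ! j \<le> ns ! i) \<and>
   (\<forall>i < length ns - 1. ns ! i > 0) \<and>
   (\<forall>i < length ns. \<forall>j < length ns. (i + 1 < j \<or> j + 1 < i) \<longrightarrow> blk (mat_adjoint D * S0 * D) ns i j = 0\<^sub>m (ns ! i) (ns ! j)) \<and>
   (\<forall>i < length ns - 1. blk (mat_adjoint D * S0 * D) ns i (length ns - 1) = 0\<^sub>m (ns ! i) (ns ! (length ns - 1)) \<and>
                blk (mat_adjoint D * S0 * D) ns (length ns - 1) i = 0\<^sub>m (ns ! (length ns - 1)) (ns ! i)) \<and>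
   (\<forall>i < length ns. skew_hermitian_mat (blk (mat_adjoint D * S0 * D) ns i i)) \<and>
   (\<forall>i. 1 \<le> i \<and> i < length ns - 1 \<longrightarrow>
       blk (mat_adjoint D * S0 * D) ns i (i - 1) = - mat_adjoint (blk (mat_adjoint D * S0 * D) ns (i - 1) i) \<and>
       (\<exists>\<Sigma>. \<Sigma> \<in> carrier_mat (ns ! i) (ns ! i) \<and> det \<Sigma> \<noteq> 0 \<and>
          blk (mat_adjoint D * S0 * D) ns i (i - 1) = append_cols \<Sigma> (0\<^sub>m (ns ! i) (ns ! (i - 1) - ns ! i))))"
    using st[folded D_def] unfolding stair_def Let_def .
  have H'eq2: "mat_adjoint U * H * U = four_block_mat H11' (0\<^sub>m (ns ! 0) (n - ns ! 0)) (0\<^sub>m (n - ns ! 0) (ns ! 0)) (0\<^sub>m (n - ns ! 0) (n - ns ! 0))"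
    using H'eq ns(2) unfolding m_def by simp
  have snsn: "sum_list ns = n" using ns nkm by simp
  show ?thesis
  proof (intro exI[of _ U] exI[of _ ns] conjI Uc Uu)
    show "let r = length ns; H' = mat_adjoint U * H * U; S' = mat_adjoint U * S * U in
       r \<ge> 2 \<and>
       (\<forall>i j. i \<le> j \<and> j < r - 1 \<longrightarrow> ns ! j \<le> ns ! i) \<and>
       (\<forall>i < r - 1. ns ! i > 0) \<and>
       sum_list ns = n \<and>
       H' = four_block_mat (blk H' ns 0 0) (0\<^sub>m (ns ! 0) (n - ns ! 0))
                           (0\<^sub>m (n - ns ! 0) (ns ! 0)) (0\<^sub>m (n - ns ! 0) (n - ns ! 0)) \<and>
       pd_mat (blk H' ns 0 0) \<and>
       (\<forall>i < r. \<forall>j < r. (i + 1 < j \<or> j + 1 < i) \<longrightarrow>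
           blk S' ns i j = 0\<^sub>m (ns ! i) (ns ! j)) \<and>
       (\<forall>i < r - 1. blk S' ns i (r - 1) = 0\<^sub>m (ns ! i) (ns ! (r - 1)) \<and>
                    blk S' ns (r - 1) i = 0\<^sub>m (ns ! (r - 1)) (ns ! i)) \<and>
       (\<forall>i < r. skew_hermitian_mat (blk S' ns i i)) \<and>
       (\<forall>i. 1 \<le> i \<and> i < r - 1 \<longrightarrow>
           blk S' ns i (i - 1) = - mat_adjoint (blk S' ns (i - 1) i) \<and>
           (\<exists>\<Sigma>. \<Sigma> \<in> carrier_mat (ns ! i) (ns ! i) \<and> det \<Sigma> \<noteq> 0 \<and>
              blk S' ns i (i - 1) = append_cols \<Sigma> (0\<^sub>m (ns ! i) (ns ! (i - 1) - ns ! i))))"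
      unfolding Let_def blk00 S'eq
      using stu H'eq2 pd' snsn by blast
  qed
qed


end
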